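(* Let $\mathbf{C}$ be a category all of whose morphisms are monomorphisms, enriched over $\mathbf{Top}$ with all homsets Hausdorff, and let $\mathbf{D}$ be a full subcategory of $\mathbf{C}$ which is a skeletal category of finite objects. Let $S \in \mathrm{Ob}(\mathbf{C})$ be universal for $\mathbf{D}$, and for each $B \in \mathrm{Ob}(\mathbf{D})$ fix a morphism $\iota_B \in \hom(B,S)$. Assume that $T_\mathbf{C}(A,S) < \infty$ for all $A \in \mathrm{Ob}(\mathbf{D})$ and that $S$ is approximable in $\mathbf{D}$ via $F : \mathrm{Ob}(\mathbf{D}) \to \mathrm{Ob}(\mathbf{D})$ and $(\Phi_A)_{A\in\mathrm{Ob}(\mathbf{D})}$. Then for every $A \in \mathrm{Ob}(\mathbf{D})$ there is an $n \in \mathbb{N}$ such that for every $k \in \mathbb{N}$ and every coloring $\chi : \bigcup_{B\in\mathrm{Ob}(\mathbf{D})} \hom(A,B) \to k$ there is $h \in \hom(S,S)$ satisfying $$\Big|\chi\Big(\bigcup_{B \in \mathrm{Ob}(\mathbf{D})} h \star \hom(A,B)\Big)\Big| \le n,$$ where for $h \in \hom(S,S)$ and $f \in \hom(A,B)$ with $A,B\in\mathrm{Ob}(\mathbf{D})$ we set $h \star f = \Phi_B(h\cdot\iota_{F(B)})\cdot f$.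
   Context: A category is enriched over $\mathbf{Top}$ if each homset is a topological space and composition is continuous. Skeletal: no two distinct objects are isomorphic. A category of finite objects is a locally small directed category whose morphisms are monomorphisms, whose skeleton has at most countably many objects, and in whose skeleton every object is the codomain of only finitely many morphisms. $S$ is universal for $\mathbf{D}$ if $\hom_\mathbf{C}(D,S)\neq\varnothing$ for every $D\in\mathrm{Ob}(\mathbf{D})$. $S$ is approximable in $\mathbf{D}$ via $F$ and $(\Phi_A)$ if each $\Phi_A:\hom_\mathbf{C}(F(A),S)\to\bigcup_{C\in\mathrm{Ob}(\mathbf{D})}\hom_\mathbf{D}(A,C)$ is Borel (preimages of open subsets of each $\hom_\mathbf{D}(A,C)$ are Borel) and for all $A,B\in\mathrm{Ob}(\mathbf{D})$, $f\in\hom_\mathbf{D}(A,B)$, $u\in\hom_\mathbf{C}(F(B),S)$ there is $f'\in\hom_\mathbf{D}(F(A),F(B))$ with $\Phi_A(u\cdot f')=\Phi_B(u)\cdot f$. $T_\mathbf{C}(X,S)$ (big embedding Ramsey degree) is the least positive integer $n$ such that for every $k\ge2$ and every Borel coloring $\chi:\hom_\mathbf{C}(X,S)\to\{0,\dots,k-1\}$ (all fibers Borel) there is $w\in\hom(S,S)$ with $|\chi(w\cdot\hom(X,S))|\le n$; $\infty$ if none. $h\star\hom(A,B)=\{h\star f: f\in\hom(A,B)\}$. *)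

theory Defs
  imports "HOL-Analysis.Analysis"
begin

text \<open>A (concrete) category: object set Ob, homsets hom A B, composition
  cmp g f (= g \<cdot> f, first f then g), identities ide.  Homsets of distinct
  pairs of objects are disjoint (each morphism has a unique domain/codomain).\<close>
definition category ::
  "'o set \<Rightarrow> ('o \<Rightarrow> 'o \<Rightarrow> 'm set) \<Rightarrow> ('m \<Rightarrow> 'm \<Rightarrow> 'm) \<Rightarrow> ('o \<Rightarrow> 'm) \<Rightarrow> bool" where
  "category Ob hom cmp ide \<longleftrightarrow>
     (\<forall>A\<in>Ob. ide A \<in> hom A A) \<and>
     (\<forall>A\<in>Ob. \<forall>B\<in>Ob. \<forall>C\<in>Ob. \<forall>f\<in>hom A B. \<forall>g\<in>hom B C. cmp g f \<in> hom A C) \<and>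
     (\<forall>A\<in>Ob. \<forall>B\<in>Ob. \<forall>C\<in>Ob. \<forall>D\<in>Ob. \<forall>f\<in>hom A B. \<forall>g\<in>hom B C. \<forall>h\<in>hom C D.
        cmp h (cmp g f) = cmp (cmp h g) f) \<and>
     (\<forall>A\<in>Ob. \<forall>B\<in>Ob. \<forall>f\<in>hom A B. cmp f (ide A) = f \<and> cmp (ide B) f = f) \<and>
     (\<forall>A\<in>Ob. \<forall>B\<in>Ob. \<forall>A'\<in>Ob. \<forall>B'\<in>Ob. (A, B) \<noteq> (A', B') \<longrightarrow> hom A B \<inter> hom A' B' = {})"

definition all_mono ::
  "'o set \<Rightarrow> ('o \<Rightarrow> 'o \<Rightarrow> 'm set) \<Rightarrow> ('m \<Rightarrow> 'm \<Rightarrow> 'm) \<Rightarrow> bool" where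
  "all_mono Ob hom cmp \<longleftrightarrow>
     (\<forall>A\<in>Ob. \<forall>B\<in>Ob. \<forall>C\<in>Ob. \<forall>f\<in>hom B C. \<forall>g\<in>hom A B. \<forall>h\<in>hom A B.
        cmp f g = cmp f h \<longrightarrow> g = h)"

definition top_enriched ::
  "'o set \<Rightarrow> ('o \<Rightarrow> 'o \<Rightarrow> 'm set) \<Rightarrow> ('m \<Rightarrow> 'm \<Rightarrow> 'm) \<Rightarrow> ('o \<Rightarrow> 'o \<Rightarrow> 'm topology) \<Rightarrow> bool" where
  "top_enriched Ob hom cmp T \<longleftrightarrow>
     (\<forall>A\<in>Ob. \<forall>B\<in>Ob. topspace (T A B) = hom A B) \<and>
     (\<forall>A\<in>Ob. \<forall>B\<in>Ob. \<forall>C\<in>Ob.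
        continuous_map (prod_topology (T B C) (T A B)) (T A C) (\<lambda>(g, f). cmp g f))"

definition borel_sets :: "'a topology \<Rightarrow> 'a set set" where
  "borel_sets X = sigma_sets (topspace X) {U. openin X U}"

definition isomorphic ::
  "('o \<Rightarrow> 'o \<Rightarrow> 'm set) \<Rightarrow> ('m \<Rightarrow> 'm \<Rightarrow> 'm) \<Rightarrow> ('o \<Rightarrow> 'm) \<Rightarrow> 'o \<Rightarrow> 'o \<Rightarrow> bool" where
  "isomorphic hom cmp ide A B \<longleftrightarrow>
     (\<exists>f\<in>hom A B. \<exists>g\<in>hom B A. cmp g f = ide A \<and> cmp f g = ide B)"

definition skeletal ::
  "'o set \<Rightarrow> ('o \<Rightarrow> 'o \<Rightarrow> 'm set) \<Rightarrow> ('m \<Rightarrow> 'm \<Rightarrow> 'm) \<Rightarrow> ('o \<Rightarrow> 'm) \<Rightarrow> bool" where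
  "skeletal Ob hom cmp ide \<longleftrightarrow>
     (\<forall>A\<in>Ob. \<forall>B\<in>Ob. isomorphic hom cmp ide A B \<longrightarrow> A = B)"

definition directed :: "'o set \<Rightarrow> ('o \<Rightarrow> 'o \<Rightarrow> 'm set) \<Rightarrow> bool" where
  "directed Ob hom \<longleftrightarrow>
     (\<forall>A\<in>Ob. \<forall>B\<in>Ob. \<exists>C\<in>Ob. hom A C \<noteq> {} \<and> hom B C \<noteq> {})"

text \<open>A skeletal category of finite objects (the skeleton is the category
  itself): directed, all morphisms mono, countably many objects, and every
  object is the codomain of only finitely many morphisms.  Local smallness is
  automatic (homsets are sets).\<close>
definition skeletal_cat_finite_objects ::
  "'o set \<Rightarrow> ('o \<Rightarrow> 'o \<Rightarrow> 'm set) \<Rightarrow> ('m \<Rightarrow> 'm \<Rightarrow> 'm) \<Rightarrow> ('o \<Rightarrow> 'm) \<Rightarrow> bool" where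
  "skeletal_cat_finite_objects Ob hom cmp ide \<longleftrightarrow>
     category Ob hom cmp ide \<and> skeletal Ob hom cmp ide \<and> directed Ob hom \<and>
     all_mono Ob hom cmp \<and> countable Ob \<and>
     (\<forall>B\<in>Ob. finite (\<Union>A\<in>Ob. hom A B))"

definition universal_for :: "'o set \<Rightarrow> ('o \<Rightarrow> 'o \<Rightarrow> 'm set) \<Rightarrow> 'o \<Rightarrow> bool" where
  "universal_for ObD hom S \<longleftrightarrow> (\<forall>D\<in>ObD. hom D S \<noteq> {})"

definition approximable ::
  "'o set \<Rightarrow> ('o \<Rightarrow> 'o \<Rightarrow> 'm set) \<Rightarrow> ('m \<Rightarrow> 'm \<Rightarrow> 'm) \<Rightarrow> ('o \<Rightarrow> 'o \<Rightarrow> 'm topology)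
    \<Rightarrow> 'o \<Rightarrow> ('o \<Rightarrow> 'o) \<Rightarrow> ('o \<Rightarrow> 'm \<Rightarrow> 'm) \<Rightarrow> bool" where
  "approximable ObD hom cmp T S F Phi \<longleftrightarrow>
     (\<forall>A\<in>ObD. F A \<in> ObD) \<and>
     (\<forall>A\<in>ObD. \<forall>u\<in>hom (F A) S. Phi A u \<in> (\<Union>C\<in>ObD. hom A C)) \<and>
     (\<forall>A\<in>ObD. \<forall>C\<in>ObD. \<forall>U. openin (T A C) U \<longrightarrow>
        {u \<in> hom (F A) S. Phi A u \<in> U} \<in> borel_sets (T (F A) S)) \<and>
     (\<forall>A\<in>ObD. \<forall>B\<in>ObD. \<forall>f\<in>hom A B. \<forall>u\<in>hom (F B) S.
        \<exists>f'\<in>hom (F A) (F B). Phi A (cmp u f') = cmp (Phi B u) f)"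

definition finite_big_ramsey_degree ::
  "('o \<Rightarrow> 'o \<Rightarrow> 'm set) \<Rightarrow> ('m \<Rightarrow> 'm \<Rightarrow> 'm) \<Rightarrow> ('o \<Rightarrow> 'o \<Rightarrow> 'm topology) \<Rightarrow> 'o \<Rightarrow> 'o \<Rightarrow> bool" where
  "finite_big_ramsey_degree hom cmp T X S \<longleftrightarrow>
     (\<exists>n::nat. n > 0 \<and>
        (\<forall>k::nat. k \<ge> 2 \<longrightarrow>
          (\<forall>(col::'m \<Rightarrow> nat). 
             (\<forall>f\<in>hom X S. col f < k) \<longrightarrow>
             (\<forall>i<k. {f \<in> hom X S. col f = i} \<in> borel_sets (T X S)) \<longrightarrow>
             (\<exists>w\<in>hom S S. card (col ` ((\<lambda>f. cmp w f) ` hom X S)) \<le> n))))"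

end

theory Submission
  imports Defs
begin

lemma finite_haus_open:
  assumes "Hausdorff_space X" "finite (topspace X)" "U \<subseteq> topspace X"
  shows "openin X U"
proof -
  have "t1_space X" using assms(1) by (simp add: Hausdorff_imp_t1_space)
  then have "closedin X (topspace X - U)"
    using assms(2) unfolding t1_space_closedin_finite by auto
  then have "openin X (topspace X - (topspace X - U))" by (rule openin_diff[OF openin_topspace])
  moreover have "topspace X - (topspace X - U) = U" using assms(3) by auto
  ultimately show ?thesis by simp
qed

lemma cat_comp:
  assumes "category Ob hom cmp ide" "A \<in> Ob" "B \<in> Ob" "C \<in> Ob" "f \<in> hom A B" "g \<in> hom B C"
  shows "cmp g f \<in> hom A C"
proof -
  have "\<forall>A\<in>Ob. \<forall>B\<in>Ob. \<forall>C\<in>Ob. \<forall>f\<in>hom A B. \<forall>g\<in>hom B C. cmp g f \<in> hom A C"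
    using assms(1) unfolding category_def by (elim conjE)
  then show ?thesis using assms(2-) by simp
qed

lemma cat_assoc:
  assumes "category Ob hom cmp ide" "A \<in> Ob" "B \<in> Ob" "C \<in> Ob" "D \<in> Ob"
    "f \<in> hom A B" "g \<in> hom B C" "h \<in> hom C D"
  shows "cmp h (cmp g f) = cmp (cmp h g) f"
proof -
  have "\<forall>A\<in>Ob. \<forall>B\<in>Ob. \<forall>C\<in>Ob. \<forall>D\<in>Ob. \<forall>f\<in>hom A B. \<forall>g\<in>hom B C. \<forall>h\<in>hom C D.
        cmp h (cmp g f) = cmp (cmp h g) f" using assms(1) unfolding category_def by (elim conjE)
  then show ?thesis using assms(2-) by simp
qed

lemma approx_lift:
  assumes "approximable ObD hom cmp T S F Phi" "A \<in> ObD" "B \<in> ObD" "f \<in> hom A B" "u \<in> hom (F B) S"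
  shows "\<exists>f'\<in>hom (F A) (F B). Phi A (cmp u f') = cmp (Phi B u) f"
proof -
  have "\<forall>A\<in>ObD. \<forall>B\<in>ObD. \<forall>f\<in>hom A B. \<forall>u\<in>hom (F B) S.
        \<exists>f'\<in>hom (F A) (F B). Phi A (cmp u f') = cmp (Phi B u) f"
    using assms(1) unfolding approximable_def by (elim conjE)
  then show ?thesis using assms(2-) by simp
qed

lemma approx_borel:
  assumes "approximable ObD hom cmp T S F Phi" "A \<in> ObD" "C \<in> ObD" "openin (T A C) U"
  shows "{u \<in> hom (F A) S. Phi A u \<in> U} \<in> borel_sets (T (F A) S)"
proof -
  have "\<forall>A\<in>ObD. \<forall>C\<in>ObD. \<forall>U. openin (T A C) U \<longrightarrow>
        {u \<in> hom (F A) S. Phi A u \<in> U} \<in> borel_sets (T (F A) S)"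
    using assms(1) unfolding approximable_def by (elim conjE)
  then show ?thesis using assms(2-) by simp
qed

theorem theorem6p3:
  fixes ObC :: "'o set" and hom :: "'o \<Rightarrow> 'o \<Rightarrow> 'm set"
    and cmp :: "'m \<Rightarrow> 'm \<Rightarrow> 'm" and ide :: "'o \<Rightarrow> 'm"
    and T :: "'o \<Rightarrow> 'o \<Rightarrow> 'm topology"
    and ObD :: "'o set" and S :: "'o" and \<iota> :: "'o \<Rightarrow> 'm"
    and F :: "'o \<Rightarrow> 'o" and Phi :: "'o \<Rightarrow> 'm \<Rightarrow> 'm"
  assumes cat: "category ObC hom cmp ide"
    and mono: "all_mono ObC hom cmp"
    and enr: "top_enriched ObC hom cmp T"
    and haus: "\<forall>A\<in>ObC. \<forall>B\<in>ObC. Hausdorff_space (T A B)"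
    and sub: "ObD \<subseteq> ObC"
    and Dfin: "skeletal_cat_finite_objects ObD hom cmp ide"
    and S: "S \<in> ObC"
    and univ: "universal_for ObD hom S"
    and iota: "\<forall>B\<in>ObD. \<iota> B \<in> hom B S"
    and ramsey: "\<forall>A\<in>ObD. finite_big_ramsey_degree hom cmp T A S"
    and approx: "approximable ObD hom cmp T S F Phi"
  shows "\<forall>A\<in>ObD. \<exists>n::nat. \<forall>k::nat. \<forall>(col::'m \<Rightarrow> nat).
           (\<forall>f\<in>(\<Union>B\<in>ObD. hom A B). col f < k) \<longrightarrow>
           (\<exists>h\<in>hom S S.
              card (col ` (\<Union>B\<in>ObD. (\<lambda>f. cmp (Phi B (cmp h (\<iota> (F B)))) f) ` hom A B)) \<le> n)"
proof
  fix A assume A: "A \<in> ObD"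
  have FA: "F A \<in> ObD" using approx A unfolding approximable_def by auto
  obtain n where n: "\<forall>k::nat. k \<ge> 2 \<longrightarrow>
          (\<forall>(col::'m \<Rightarrow> nat).
             (\<forall>f\<in>hom (F A) S. col f < k) \<longrightarrow>
             (\<forall>i<k. {f \<in> hom (F A) S. col f = i} \<in> borel_sets (T (F A) S)) \<longrightarrow>
             (\<exists>w\<in>hom S S. card (col ` ((\<lambda>f. cmp w f) ` hom (F A) S)) \<le> n))"
    using ramsey FA unfolding finite_big_ramsey_degree_def by blast
  show "\<exists>n::nat. \<forall>k::nat. \<forall>(col::'m \<Rightarrow> nat).
           (\<forall>f\<in>(\<Union>B\<in>ObD. hom A B). col f < k) \<longrightarrow>
           (\<exists>h\<in>hom S S.
              card (col ` (\<Union>B\<in>ObD. (\<lambda>f. cmp (Phi B (cmp h (\<iota> (F B)))) f) ` hom A B)) \<le> n)"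
  proof (intro exI allI impI)
    fix k :: nat and col :: "'m \<Rightarrow> nat"
    assume colk: "\<forall>f\<in>(\<Union>B\<in>ObD. hom A B). col f < k"
    define g where "g = (\<lambda>u. col (Phi A u))"
    define k' where "k' = max k 2"
    have PhiA: "\<And>u. u \<in> hom (F A) S \<Longrightarrow> Phi A u \<in> (\<Union>C\<in>ObD. hom A C)"
      using approx A unfolding approximable_def by auto
    have gk: "\<forall>f\<in>hom (F A) S. g f < k'"
      using PhiA colk unfolding g_def k'_def by fastforce
    have topS: "topspace (T (F A) S) = hom (F A) S"
      using enr FA sub S unfolding top_enriched_def by auto
    have bor: "{f \<in> hom (F A) S. g f = i} \<in> borel_sets (T (F A) S)" for i
    proof -
      let ?M = "borel_sets (T (F A) S)"
      have sa: "sigma_algebra (topspace (T (F A) S)) ?M"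
        unfolding borel_sets_def by (rule sigma_algebra_sigma_sets) (auto dest: openin_subset)
      have eq: "{f \<in> hom (F A) S. g f = i} =
        (\<Union>C\<in>ObD. {u \<in> hom (F A) S. Phi A u \<in> {x \<in> hom A C. col x = i}})"
        using PhiA unfolding g_def by blast
      have each: "{u \<in> hom (F A) S. Phi A u \<in> {x \<in> hom A C. col x = i}} \<in> ?M"
        if C: "C \<in> ObD" for C
      proof -
        have fin: "finite (hom A C)"
          using Dfin C A unfolding skeletal_cat_finite_objects_def
          by (meson UN_upper finite_subset)
        have top: "topspace (T A C) = hom A C"
        proof -
          have "A \<in> ObC" "C \<in> ObC" using A C sub by auto
          then show ?thesis using enr unfolding top_enriched_def by simp
        qed
        have "openin (T A C) {x \<in> hom A C. col x = i}"
          by (rule finite_haus_open) (use haus A C sub fin top in auto)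
        then show ?thesis using approx_borel[OF approx A C] by blast
      qed
      have "countable ObD" using Dfin unfolding skeletal_cat_finite_objects_def by auto
      then show ?thesis unfolding eq
        by (rule sigma_algebra.countable_UN''[OF sa]) (use each in auto)
    qed
    obtain w where w: "w \<in> hom S S" and wc: "card (g ` ((\<lambda>f. cmp w f) ` hom (F A) S)) \<le> n"
      using n[rule_format, of k' g] gk bor unfolding k'_def by auto
    have catD: "category ObC hom cmp ide" by (rule cat)
    have sub2: "col ` (\<Union>B\<in>ObD. (\<lambda>f. cmp (Phi B (cmp w (\<iota> (F B)))) f) ` hom A B)
       \<subseteq> g ` ((\<lambda>f. cmp w f) ` hom (F A) S)"
    proof
      fix c assume "c \<in> col ` (\<Union>B\<in>ObD. (\<lambda>f. cmp (Phi B (cmp w (\<iota> (F B)))) f) ` hom A B)"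
      then obtain B f where B: "B \<in> ObD" and f: "f \<in> hom A B"
        and c: "c = col (cmp (Phi B (cmp w (\<iota> (F B)))) f)" by blast
      have FB: "F B \<in> ObD" using approx B unfolding approximable_def by auto
      have u: "cmp w (\<iota> (F B)) \<in> hom (F B) S"
        using cat_comp[OF cat, of "F B" S S "\<iota> (F B)" w] w iota FB sub S by blast
      obtain f' where f': "f' \<in> hom (F A) (F B)"
        and eqf: "Phi A (cmp (cmp w (\<iota> (F B))) f') = cmp (Phi B (cmp w (\<iota> (F B)))) f"
        using approx_lift[OF approx A B f u] by blast
      have assoc: "cmp (cmp w (\<iota> (F B))) f' = cmp w (cmp (\<iota> (F B)) f')"
        using cat_assoc[OF cat, of "F A" "F B" S S f' "\<iota> (F B)" w] w iota FB FA f' sub S by (metis subsetD)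
      have v: "cmp (\<iota> (F B)) f' \<in> hom (F A) S"
        using cat_comp[OF cat, of "F A" "F B" S f' "\<iota> (F B)"] iota FB FA f' sub S by auto
      have "c = g (cmp w (cmp (\<iota> (F B)) f'))" unfolding g_def c eqf[symmetric] assoc ..
      then show "c \<in> g ` ((\<lambda>f. cmp w f) ` hom (F A) S)" using v by blast
    qed
    have finI: "finite (g ` ((\<lambda>f. cmp w f) ` hom (F A) S))"
    proof (rule finite_subset[of _ "{..<k'}"])
      show "g ` ((\<lambda>f. cmp w f) ` hom (F A) S) \<subseteq> {..<k'}"
      proof
        fix x assume "x \<in> g ` ((\<lambda>f. cmp w f) ` hom (F A) S)"
        then obtain v where v: "v \<in> hom (F A) S" and x: "x = g (cmp w v)" by blast
        have "cmp w v \<in> hom (F A) S" using cat_comp[OF cat, of "F A" S S v w] w v FA sub S by auto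
        then show "x \<in> {..<k'}" using gk x by auto
      qed
    qed simp
    show "\<exists>h\<in>hom S S.
              card (col ` (\<Union>B\<in>ObD. (\<lambda>f. cmp (Phi B (cmp h (\<iota> (F B)))) f) ` hom A B)) \<le> n"
      using w card_mono[OF finI sub2] wc by (intro bexI[of _ w]) auto
  qed
qed

end
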